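(* Points $A,B,C,D\in I^3$ are consecutive vertices of a convex quadrilateral not lying in an isotropic plane if and only if the planes $A^*,B^*,C^*,D^*$ contain consecutive flat angles of an admissible convex 4-hedral angle.
   Context: $I^3$ is $\mathbb{R}^3$ with coordinates $(x,y,z)$; a line or plane is isotropic if parallel to the $z$-axis. Metric duality: a point $P=(P^1,P^2,P^3)$ corresponds to the plane $P^*\colon z=P^1x+P^2y-P^3$. Given a convex quadrilateral in a plane and a point $O$ not in the plane, the union of all rays from $O$ meeting the quadrilateral is a convex 4-hedral angle with vertex $O$; the union of rays from $O$ meeting one side of the quadrilateral is a flat angle; the four flat angles are consecutive in the order of the sides. The 4-hedral angle is admissible if the isotropic line through $O$ meets its interior. *)

theory Defs
  imports "HOL-Analysis.Analysis"
begin

text \<open>The space I^3 is modelled as real^3, coordinates x = X$1, y = X$2, z = X$3.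
  The isotropic direction is the z-axis, axis 3 1.\<close>

definition isotropic_dir :: "real^3" where
  "isotropic_dir = axis 3 1"

definition isotropic_plane :: "(real^3) set \<Rightarrow> bool" where
  "isotropic_plane S \<longleftrightarrow> affine S \<and> aff_dim S = 2 \<and>
     (\<forall>x\<in>S. \<forall>t::real. x + t *\<^sub>R isotropic_dir \<in> S)"

definition isotropic_line :: "real^3 \<Rightarrow> (real^3) set" where
  "isotropic_line V = {V + t *\<^sub>R isotropic_dir | t. True}"

definition dual_plane :: "real^3 \<Rightarrow> (real^3) set" where
  "dual_plane P = {X. X$3 = P$1 * X$1 + P$2 * X$2 - P$3}"

definition convex_quadrilateral :: "real^3 \<Rightarrow> real^3 \<Rightarrow> real^3 \<Rightarrow> real^3 \<Rightarrow> bool" where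
  "convex_quadrilateral A B C D \<longleftrightarrow>
     distinct [A, B, C, D] \<and> aff_dim {A, B, C, D} = 2 \<and>
     (\<forall>P\<in>{A, B, C, D}. P extreme_point_of (convex hull {A, B, C, D})) \<and>
     closed_segment A B face_of (convex hull {A, B, C, D}) \<and>
     closed_segment B C face_of (convex hull {A, B, C, D}) \<and>
     closed_segment C D face_of (convex hull {A, B, C, D}) \<and>
     closed_segment D A face_of (convex hull {A, B, C, D})"

definition ray_cone :: "real^3 \<Rightarrow> (real^3) set \<Rightarrow> (real^3) set" where
  "ray_cone V S = {V + t *\<^sub>R (q - V) | t q. 0 \<le> t \<and> q \<in> S}"

text \<open>Convex 4-hedral angle with vertex V over the quadrilateral Q1 Q2 Q3 Q4
  (the latter assumed convex and V not in its plane).\<close>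
definition hedral_angle4 :: "real^3 \<Rightarrow> real^3 \<Rightarrow> real^3 \<Rightarrow> real^3 \<Rightarrow> real^3 \<Rightarrow> (real^3) set" where
  "hedral_angle4 V Q1 Q2 Q3 Q4 = ray_cone V (convex hull {Q1, Q2, Q3, Q4})"

definition flat_angle :: "real^3 \<Rightarrow> real^3 \<Rightarrow> real^3 \<Rightarrow> (real^3) set" where
  "flat_angle V P Q = ray_cone V (closed_segment P Q)"

definition admissible :: "real^3 \<Rightarrow> (real^3) set \<Rightarrow> bool" where
  "admissible V K \<longleftrightarrow> isotropic_line V \<inter> interior K \<noteq> {}"

end

theory Submission imports Defs "HOL-Analysis.Cross3" begin
unbundle cross3_syntax

lemma noncol_cross:
  fixes A B C :: "real^3"
  shows "(B - A) \<times> (C - A) \<noteq> 0 \<longleftrightarrow> \<not> collinear {A, B, C}"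
proof -
  have "collinear {A,B,C} = collinear {B,A,C}" by (simp add: insert_commute)
  also have "\<dots> = collinear {0, B - A, C - A}" by (rule collinear_3) simp
  finally show ?thesis by (simp add: cross_eq_0)
qed

lemma hull_plane:
  fixes A B C D :: "real^3"
  assumes n: "(B - A) \<times> (C - A) \<noteq> 0"
    and D: "((B - A) \<times> (C - A)) \<bullet> D = ((B - A) \<times> (C - A)) \<bullet> A"
  shows "affine hull {A,B,C,D} = {x. ((B - A) \<times> (C - A)) \<bullet> x = ((B - A) \<times> (C - A)) \<bullet> A}"
proof -
  let ?n = "(B - A) \<times> (C - A)"
  let ?H = "{x. ?n \<bullet> x = ?n \<bullet> A}"
  have nc: "\<not> collinear {A,B,C}" using n noncol_cross by blast
  hence dist: "A \<noteq> B" "A \<noteq> C" "B \<noteq> C" by (auto simp: collinear_3_eq_affine_dependent)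
  have ind: "\<not> affine_dependent {A,B,C}" using nc collinear_3_eq_affine_dependent by blast
  have "int (card {A,B,C}) = aff_dim {A,B,C} + 1" using aff_dim_affine_independent[OF ind] by simp
  hence ad: "aff_dim {A,B,C} = 2" using dist by simp
  have HB: "?n \<bullet> B = ?n \<bullet> A"
  proof -
    have "?n \<bullet> (B - A) = 0" by (simp add: dot_cross_self)
    thus ?thesis by (simp add: inner_diff_right)
  qed
  have HC: "?n \<bullet> C = ?n \<bullet> A"
  proof -
    have "?n \<bullet> (C - A) = 0" by (simp add: dot_cross_self)
    thus ?thesis by (simp add: inner_diff_right)
  qed
  have sub: "affine hull {A,B,C} \<subseteq> ?H"
    by (rule hull_minimal) (use HB HC affine_hyperplane in auto)
  have dH: "aff_dim ?H = 2" using n by simp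
  have eq: "affine hull {A,B,C} = ?H"
    by (rule affine_dim_equal) (use sub dH ad affine_hyperplane in auto)
  have "D \<in> affine hull {A,B,C}" using eq D by auto
  hence "affine hull {D,A,B,C} = affine hull {A,B,C}" by (rule hull_redundant)
  moreover have "{A,B,C,D} = {D,A,B,C}" by auto
  ultimately show ?thesis using eq by simp
qed

lemma hull_face:
  fixes S T :: "'a::euclidean_space set"
  assumes fin: "finite S" and TS: "T \<subseteq> S" and eqT: "\<forall>p\<in>T. a \<bullet> p = b"
    and gt: "\<forall>p\<in>S - T. a \<bullet> p > b"
  shows "convex hull S \<inter> {x. a \<bullet> x = b} = convex hull T"
    and "convex hull T face_of convex hull S"
proof -
  have ge: "\<forall>p\<in>S. a \<bullet> p \<ge> b" using eqT gt by force
  have hge: "\<And>x. x \<in> convex hull S \<Longrightarrow> a \<bullet> x \<ge> b"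
  proof -
    fix x assume "x \<in> convex hull S"
    moreover have "convex hull S \<subseteq> {x. a \<bullet> x \<ge> b}"
      by (rule hull_minimal) (use ge convex_halfspace_ge in auto)
    ultimately show "a \<bullet> x \<ge> b" by auto
  qed
  have finT: "finite T" using fin TS finite_subset by blast
  show eq: "convex hull S \<inter> {x. a \<bullet> x = b} = convex hull T"
  proof
    show "convex hull T \<subseteq> convex hull S \<inter> {x. a \<bullet> x = b}"
    proof -
      have "convex hull T \<subseteq> convex hull S" by (rule hull_mono[OF TS])
      moreover have "convex hull T \<subseteq> {x. a \<bullet> x = b}"
        by (rule hull_minimal) (use eqT convex_hyperplane in auto)
      ultimately show ?thesis by blast
    qed
  next
    show "convex hull S \<inter> {x. a \<bullet> x = b} \<subseteq> convex hull T"
    proof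
      fix x assume x: "x \<in> convex hull S \<inter> {x. a \<bullet> x = b}"
      then obtain u where u0: "\<forall>p\<in>S. 0 \<le> u p" and u1: "sum u S = 1"
        and ux: "(\<Sum>p\<in>S. u p *\<^sub>R p) = x"
        using convex_hull_finite[OF fin] by auto
      have "a \<bullet> x = (\<Sum>p\<in>S. u p * (a \<bullet> p))"
        using ux by (auto simp: inner_sum_right)
      hence "(\<Sum>p\<in>S. u p * (a \<bullet> p)) = (\<Sum>p\<in>S. u p * b)"
        using x u1 by (simp add: sum_distrib_right[symmetric])
      hence "(\<Sum>p\<in>S. u p * (a \<bullet> p - b)) = 0"
        by (simp add: right_diff_distrib sum_subtractf)
      moreover have "\<forall>p\<in>S. 0 \<le> u p * (a \<bullet> p - b)" using u0 ge by simp
      ultimately have z: "\<forall>p\<in>S. u p * (a \<bullet> p - b) = 0"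
        using sum_nonneg_eq_0_iff[OF fin, of "\<lambda>p. u p * (a \<bullet> p - b)"] by simp
      have uz: "\<forall>p\<in>S - T. u p = 0"
      proof
        fix p assume p: "p \<in> S - T"
        hence "u p * (a \<bullet> p - b) = 0" "a \<bullet> p - b \<noteq> 0" using z gt by auto
        thus "u p = 0" by simp
      qed
      have s1: "sum u T = 1"
        using u1 sum.mono_neutral_right[OF fin TS, of u] uz by simp
      have s2: "(\<Sum>p\<in>T. u p *\<^sub>R p) = x"
        using ux sum.mono_neutral_right[OF fin TS, of "\<lambda>p. u p *\<^sub>R p"] uz by simp
      show "x \<in> convex hull T"
        using convex_hull_finite[OF finT] u0 TS s1 s2 by blast
    qed
  qed
  show "convex hull T face_of convex hull S"
    using face_of_Int_supporting_hyperplane_ge[of "convex hull S" b a] hge eq by simp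
qed

lemma dual_vecs:
  fixes e f :: "real^3"
  assumes n: "e \<times> f \<noteq> 0"
  shows "\<exists>w1 w2. w1 \<bullet> e = 1 \<and> w1 \<bullet> f = 0 \<and> w2 \<bullet> e = 0 \<and> w2 \<bullet> f = 1"
proof -
  let ?n = "e \<times> f"
  have nn: "?n \<bullet> ?n \<noteq> 0" using n by simp
  define w1 where "w1 = (1 / (?n \<bullet> ?n)) *\<^sub>R (f \<times> ?n)"
  define w2 where "w2 = (1 / (?n \<bullet> ?n)) *\<^sub>R (?n \<times> e)"
  have a: "(f \<times> ?n) \<bullet> e = ?n \<bullet> ?n"
    unfolding inner_vec_def sum_3 cross_components by (simp add: algebra_simps)
  have b: "(?n \<times> e) \<bullet> f = ?n \<bullet> ?n"
    unfolding inner_vec_def sum_3 cross_components by (simp add: algebra_simps)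
  have c: "(f \<times> ?n) \<bullet> f = 0" "(?n \<times> e) \<bullet> e = 0" by (simp_all add: dot_cross_self)
  show ?thesis
    by (rule exI[of _ w1], rule exI[of _ w2]) (use nn a b c in \<open>simp add: w1_def w2_def\<close>)
qed

lemma cq_intro:
  fixes A B C D :: "real^3"
  assumes n: "(B - A) \<times> (C - A) \<noteq> 0"
    and D: "D = A + u *\<^sub>R (B - A) + v *\<^sub>R (C - A)"
    and u: "u < 0" and v: "0 < v" and uv: "u + v < 1"
  shows "convex_quadrilateral A B C D"
proof -
  obtain w1 w2 where w: "w1 \<bullet> (B - A) = 1" "w1 \<bullet> (C - A) = 0" "w2 \<bullet> (B - A) = 0" "w2 \<bullet> (C - A) = 1"
    using dual_vecs[OF n] by blast
  have val: "\<And>c. c \<bullet> B = c \<bullet> A + c \<bullet> (B - A)" "\<And>c. c \<bullet> C = c \<bullet> A + c \<bullet> (C - A)"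
    "\<And>c. c \<bullet> D = c \<bullet> A + u * (c \<bullet> (B - A)) + v * (c \<bullet> (C - A))"
    by (simp_all add: D inner_diff_right inner_add_right)
  have w1v: "w1 \<bullet> B = w1 \<bullet> A + 1" "w1 \<bullet> C = w1 \<bullet> A" "w1 \<bullet> D = w1 \<bullet> A + u"
    using val w by auto
  have w2v: "w2 \<bullet> B = w2 \<bullet> A" "w2 \<bullet> C = w2 \<bullet> A + 1" "w2 \<bullet> D = w2 \<bullet> A + v"
    using val w by auto
  have nc: "\<not> collinear {A,B,C}" using n noncol_cross by blast
  hence d3: "A \<noteq> B" "A \<noteq> C" "B \<noteq> C" by (auto simp: collinear_3_eq_affine_dependent)
  have dD: "D \<noteq> A" "D \<noteq> B" "D \<noteq> C" using w1v w2v u v by auto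
  have dist: "distinct [A,B,C,D]" using d3 dD by auto
  let ?n = "(B - A) \<times> (C - A)"
  have o1: "?n \<bullet> (B - A) = 0" "?n \<bullet> (C - A) = 0"
    by (metis dot_cross_self(1) inner_commute, simp add: dot_cross_self)
  have nD: "?n \<bullet> D = ?n \<bullet> A"
    using o1 by (simp add: D inner_add_right)
  have "aff_dim {A,B,C,D} = aff_dim (affine hull {A,B,C,D})" by simp
  also have "\<dots> = 2" using hull_plane[OF n nD] n by simp
  finally have ad: "aff_dim {A,B,C,D} = 2" .
  let ?S = "{A,B,C,D}"
  have fin: "finite ?S" by simp
  have f12: "closed_segment A B face_of convex hull ?S"
  proof -
    have "convex hull {A,B} face_of convex hull ?S"
      by (rule hull_face(2)[OF fin, of _ w2 "w2 \<bullet> A"]) (use w2v v in auto)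
    thus ?thesis by (simp add: segment_convex_hull)
  qed
  have f23: "closed_segment B C face_of convex hull ?S"
  proof -
    have "convex hull {B,C} face_of convex hull ?S"
      by (rule hull_face(2)[OF fin, of _ "-(w1 + w2)" "- ((w1 + w2) \<bullet> A) - 1"])
         (use w1v w2v uv in \<open>auto simp: inner_add_left inner_diff_left inner_minus_left algebra_simps\<close>)
    thus ?thesis by (simp add: segment_convex_hull)
  qed
  have f34: "closed_segment C D face_of convex hull ?S"
  proof -
    have "convex hull {C,D} face_of convex hull ?S"
      by (rule hull_face(2)[OF fin, of _ "(1 - v) *\<^sub>R w1 + u *\<^sub>R w2" "((1 - v) *\<^sub>R w1 + u *\<^sub>R w2) \<bullet> A + u"])
         (use w1v w2v uv u v in \<open>auto simp: inner_add_left algebra_simps\<close>)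
    thus ?thesis by (simp add: segment_convex_hull)
  qed
  have f41: "closed_segment D A face_of convex hull ?S"
  proof -
    have "convex hull {D,A} face_of convex hull ?S"
      by (rule hull_face(2)[OF fin, of _ "v *\<^sub>R w1 - u *\<^sub>R w2" "(v *\<^sub>R w1 - u *\<^sub>R w2) \<bullet> A"])
         (use w1v w2v uv u v in \<open>auto simp: inner_diff_left algebra_simps\<close>)
    thus ?thesis by (simp add: segment_convex_hull)
  qed
  have eA: "A extreme_point_of (convex hull ?S)" "B extreme_point_of (convex hull ?S)"
    using extreme_point_of_face[OF f12] extreme_point_of_segment[of _ A B] by blast+
  have eC: "C extreme_point_of (convex hull ?S)" "D extreme_point_of (convex hull ?S)"
    using extreme_point_of_face[OF f34] extreme_point_of_segment[of _ C D] by blast+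
  have ext: "\<forall>P\<in>?S. P extreme_point_of (convex hull ?S)"
    using eA eC by blast
  show ?thesis unfolding convex_quadrilateral_def
    using dist ad ext f12 f23 f34 f41 by blast
qed

lemma extreme_not_between:
  fixes P Y Z :: "'a::euclidean_space"
  assumes "P extreme_point_of K" "Y \<in> K" "Z \<in> K" "P \<in> closed_segment Y Z" "P \<noteq> Y" "P \<noteq> Z"
  shows False
proof -
  have "P \<in> open_segment Y Z" using assms(4-6) by (simp add: open_segment_def)
  thus False using assms(1-3) by (auto simp: extreme_point_of_def)
qed

lemma edge_fun:
  fixes P Q :: "'a::euclidean_space"
  assumes F: "closed_segment P Q face_of convex hull S" and fin: "finite S"
  shows "\<exists>a b. a \<bullet> P = b \<and> a \<bullet> Q = b \<and> (\<forall>x\<in>convex hull S. a \<bullet> x \<le> b) \<and>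
           (\<forall>x\<in>convex hull S. a \<bullet> x = b \<longrightarrow> x \<in> closed_segment P Q)"
proof -
  have "closed_segment P Q exposed_face_of convex hull S"
    using exposed_face_of_polyhedron[OF polyhedron_convex_hull[OF fin]] F by blast
  then obtain a b where sub: "convex hull S \<subseteq> {x. a \<bullet> x \<le> b}"
    and eq: "closed_segment P Q = convex hull S \<inter> {x. a \<bullet> x = b}"
    unfolding exposed_face_of_def by blast
  have "P \<in> closed_segment P Q" "Q \<in> closed_segment P Q" by auto
  hence "a \<bullet> P = b" "a \<bullet> Q = b" using eq by blast+
  thus ?thesis using sub eq by blast
qed

lemma cq_elim:
  fixes A B C D :: "real^3"
  assumes cq: "convex_quadrilateral A B C D"
  shows "(B - A) \<times> (C - A) \<noteq> 0 \<and>
     (\<exists>u v. D = A + u *\<^sub>R (B - A) + v *\<^sub>R (C - A) \<and> u < 0 \<and> 0 < v \<and> u + v < 1)"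
proof -
  let ?S = "{A,B,C,D}"
  let ?K = "convex hull ?S"
  have dist: "distinct [A,B,C,D]" and ad: "aff_dim ?S = 2"
    and ext: "\<forall>P\<in>?S. P extreme_point_of ?K"
    and f12: "closed_segment A B face_of ?K" and f23: "closed_segment B C face_of ?K"
    and f41: "closed_segment D A face_of ?K"
    using cq unfolding convex_quadrilateral_def by blast+
  have inK: "A \<in> ?K" "B \<in> ?K" "C \<in> ?K" "D \<in> ?K" by (auto intro: hull_inc)
  have nc: "\<not> collinear {A,B,C}"
  proof
    assume "collinear {A,B,C}"
    hence "between (B,C) A \<or> between (C,A) B \<or> between (A,B) C"
      by (simp add: collinear_between_cases)
    thus False
      using extreme_not_between[of _ ?K] ext inK dist by (auto simp: between_mem_segment)
  qed
  have n: "(B - A) \<times> (C - A) \<noteq> 0" using nc noncol_cross by blast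
  have ind: "\<not> affine_dependent {A,B,C}" using nc collinear_3_eq_affine_dependent by blast
  have "int (card {A,B,C}) = aff_dim {A,B,C} + 1" using aff_dim_affine_independent[OF ind] by simp
  hence ad3: "aff_dim {A,B,C} = 2" using dist by simp
  have "affine hull {A,B,C} = affine hull ?S"
  proof (rule affine_dim_equal)
    show "affine hull {A,B,C} \<subseteq> affine hull ?S" by (rule hull_mono) auto
  qed (use ad ad3 in auto)
  hence "D \<in> affine hull {A,B,C}" by (auto intro: hull_inc)
  then obtain a b c where abc: "D = a *\<^sub>R A + b *\<^sub>R B + c *\<^sub>R C" "a + b + c = 1"
    unfolding affine_hull_3 by blast
  have Dform: "D = A + b *\<^sub>R (B - A) + c *\<^sub>R (C - A)"
  proof -
    have "a = 1 - b - c" using abc(2) by simp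
    hence "D = (1 - b - c) *\<^sub>R A + b *\<^sub>R B + c *\<^sub>R C" using abc(1) by simp
    thus ?thesis by (simp add: algebra_simps)
  qed
  have val: "\<And>w. w \<bullet> D = w \<bullet> A + b * (w \<bullet> B - w \<bullet> A) + c * (w \<bullet> C - w \<bullet> A)"
    using Dform by (simp add: inner_add_right inner_diff_right)
  have notin: "\<And>X Y Z. X \<in> ?S \<Longrightarrow> Y \<in> ?S \<Longrightarrow> Z \<in> ?S \<Longrightarrow> X \<noteq> Y \<Longrightarrow> X \<noteq> Z \<Longrightarrow>
      X \<notin> closed_segment Y Z"
    using extreme_not_between[of _ ?K] ext by (blast intro: hull_inc)
  have c: "0 < c"
  proof -
    obtain w t where w: "w \<bullet> A = t" "w \<bullet> B = t" "\<forall>x\<in>?K. w \<bullet> x \<le> t"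
      "\<forall>x\<in>?K. w \<bullet> x = t \<longrightarrow> x \<in> closed_segment A B"
      using edge_fun[OF f12] by blast
    have "w \<bullet> C < t" using w(3,4) inK notin[of C A B] dist by force
    moreover have "w \<bullet> D < t" using w(3,4) inK notin[of D A B] dist by force
    ultimately have "c * (w \<bullet> C - t) < 0" using val[of w] w by simp
    moreover have "w \<bullet> C - t < 0" using \<open>w \<bullet> C < t\<close> by simp
    ultimately show ?thesis by (simp add: mult_less_0_iff)
  qed
  have bc: "b + c < 1"
  proof -
    obtain w t where w: "w \<bullet> B = t" "w \<bullet> C = t" "\<forall>x\<in>?K. w \<bullet> x \<le> t"
      "\<forall>x\<in>?K. w \<bullet> x = t \<longrightarrow> x \<in> closed_segment B C"
      using edge_fun[OF f23] by blast
    have "w \<bullet> A < t" using w(3,4) inK notin[of A B C] dist by force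
    moreover have "w \<bullet> D < t" using w(3,4) inK notin[of D B C] dist by force
    ultimately have "(1 - b - c) * (t - w \<bullet> A) > 0" using val[of w] w by (simp add: algebra_simps)
    moreover have "t - w \<bullet> A > 0" using \<open>w \<bullet> A < t\<close> by simp
    ultimately show ?thesis by (simp add: zero_less_mult_iff)
  qed
  have b: "b < 0"
  proof -
    obtain w t where w: "w \<bullet> D = t" "w \<bullet> A = t" "\<forall>x\<in>?K. w \<bullet> x \<le> t"
      "\<forall>x\<in>?K. w \<bullet> x = t \<longrightarrow> x \<in> closed_segment D A"
      using edge_fun[OF f41] by blast
    have "w \<bullet> B < t" using w(3,4) inK notin[of B D A] dist by force
    moreover have "w \<bullet> C < t" using w(3,4) inK notin[of C D A] dist by force
    ultimately have "b * (w \<bullet> B - t) = - c * (w \<bullet> C - t)" using val[of w] w by (simp add: algebra_simps)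
    moreover have "c * (w \<bullet> C - t) < 0" using c \<open>w \<bullet> C < t\<close> by (intro mult_pos_neg) auto
    hence "- c * (w \<bullet> C - t) > 0" by simp
    ultimately have "b * (w \<bullet> B - t) > 0" by simp
    thus ?thesis using \<open>w \<bullet> B < t\<close> by (simp add: zero_less_mult_iff)
  qed
  show ?thesis using n Dform b c bc by blast
qed


lemma decomp_cov:
  fixes w e1 e2 e3 :: "real^3"
  shows "(e1 \<bullet> (e2 \<times> e3)) *\<^sub>R w = (w \<bullet> e1) *\<^sub>R (e2 \<times> e3) + (w \<bullet> e2) *\<^sub>R (e3 \<times> e1) + (w \<bullet> e3) *\<^sub>R (e1 \<times> e2)"
  by (simp add: vec_eq_iff forall_3 inner_vec_def sum_3 cross_components algebra_simps)

lemma decomp_vec: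
  fixes x e1 e2 e3 :: "real^3"
  shows "(e1 \<bullet> (e2 \<times> e3)) *\<^sub>R x = (x \<bullet> (e2 \<times> e3)) *\<^sub>R e1 + (x \<bullet> (e3 \<times> e1)) *\<^sub>R e2 + (x \<bullet> (e1 \<times> e2)) *\<^sub>R e3"
  by (simp add: vec_eq_iff forall_3 inner_vec_def sum_3 cross_components algebra_simps)

lemma triple_cyc:
  fixes e1 e2 e3 :: "real^3"
  shows "(e1 \<times> e2) \<bullet> e3 = e1 \<bullet> (e2 \<times> e3)" "(e2 \<times> e3) \<bullet> e1 = e1 \<bullet> (e2 \<times> e3)"
    "(e3 \<times> e1) \<bullet> e2 = e1 \<bullet> (e2 \<times> e3)"
  by (simp_all add: inner_vec_def sum_3 cross_components algebra_simps)

lemma cross_cross_cyc: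
  fixes e1 e2 e3 :: "real^3"
  shows "(e2 \<times> e3) \<times> (e3 \<times> e1) = (e1 \<bullet> (e2 \<times> e3)) *\<^sub>R e3"
  by (simp add: vec_eq_iff forall_3 inner_vec_def sum_3 cross_components algebra_simps)

lemma apex_id:
  fixes V Q1 Q2 Q3 :: "real^3"
  shows "((Q2 - Q1) \<times> (Q3 - Q1)) \<bullet> (Q1 - V) = (Q1 - V) \<bullet> ((Q2 - V) \<times> (Q3 - V))"
  by (simp add: inner_vec_def sum_3 cross_components algebra_simps)

definition hat :: "real^3 \<Rightarrow> real^3" where
  "hat A = vector [A$1, A$2, -1]"

lemma hat_inner: "hat A \<bullet> X = A$1 * X$1 + A$2 * X$2 - X$3"
  by (simp add: hat_def inner_vec_def sum_3)

lemma dual_hat: "X \<in> dual_plane A \<longleftrightarrow> hat A \<bullet> X = A$3"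
  by (auto simp: dual_plane_def hat_inner)

lemma hat_E: "hat A \<bullet> isotropic_dir = -1"
  by (simp add: hat_inner isotropic_dir_def axis_def)

lemma flat_mem:
  shows "V \<in> flat_angle V P Q" "P \<in> flat_angle V P Q" "Q \<in> flat_angle V P Q"
proof -
  have "V = V + 0 *\<^sub>R (P - V) \<and> 0 \<le> (0::real) \<and> P \<in> closed_segment P Q" by simp
  thus "V \<in> flat_angle V P Q" unfolding flat_angle_def ray_cone_def by blast
  have "P = V + 1 *\<^sub>R (P - V) \<and> 0 \<le> (1::real) \<and> P \<in> closed_segment P Q" by simp
  thus "P \<in> flat_angle V P Q" unfolding flat_angle_def ray_cone_def by blast
  have "Q = V + 1 *\<^sub>R (Q - V) \<and> 0 \<le> (1::real) \<and> Q \<in> closed_segment P Q" by simp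
  thus "Q \<in> flat_angle V P Q" unfolding flat_angle_def ray_cone_def by blast
qed

lemma flat_sub:
  assumes "hat A \<bullet> V = A$3" "hat A \<bullet> P = A$3" "hat A \<bullet> Q = A$3"
  shows "flat_angle V P Q \<subseteq> dual_plane A"
proof
  fix x assume "x \<in> flat_angle V P Q"
  then obtain t q where x: "x = V + t *\<^sub>R (q - V)" and q: "q \<in> closed_segment P Q"
    unfolding flat_angle_def ray_cone_def by blast
  obtain s where qs: "q = (1 - s) *\<^sub>R P + s *\<^sub>R Q" using q unfolding closed_segment_def by blast
  have "hat A \<bullet> q = (1 - s) * (hat A \<bullet> P) + s * (hat A \<bullet> Q)" by (simp add: qs inner_add_right)
  hence "hat A \<bullet> q = A$3" using assms by (simp add: algebra_simps)
  hence "hat A \<bullet> x = A$3" using assms x by (simp add: inner_add_right inner_diff_right)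
  thus "x \<in> dual_plane A" by (simp add: dual_hat)
qed

lemma hull4_mem:
  fixes Q1 Q2 Q3 Q4 :: "'a::real_vector"
  assumes "a1 \<ge> 0" "a2 \<ge> 0" "a3 \<ge> 0" "a4 \<ge> 0" "a1 + a2 + a3 + a4 = 1"
  shows "a1 *\<^sub>R Q1 + a2 *\<^sub>R Q2 + a3 *\<^sub>R Q3 + a4 *\<^sub>R Q4 \<in> convex hull {Q1,Q2,Q3,Q4}"
proof -
  define y :: "nat \<Rightarrow> 'a" where "y i = (if i = 1 then Q1 else if i = 2 then Q2 else if i = 3 then Q3 else Q4)" for i
  define a :: "nat \<Rightarrow> real" where "a i = (if i = 1 then a1 else if i = 2 then a2 else if i = 3 then a3 else a4)" for i
  have "(\<Sum>j\<in>{1,2,3,4}. a j *\<^sub>R y j) \<in> convex hull {Q1,Q2,Q3,Q4}"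
    by (rule convex_sum) (use assms in \<open>auto simp: a_def y_def intro: hull_inc\<close>)
  thus ?thesis by (simp add: a_def y_def add.assoc)
qed

lemma int_half:
  fixes V Q1 Q2 Q3 Q4 psi :: "real^3"
  assumes psi: "psi \<noteq> 0" and ge: "\<forall>Q\<in>{Q1,Q2,Q3,Q4}. psi \<bullet> (Q - V) \<ge> 0"
    and x: "x \<in> interior (hedral_angle4 V Q1 Q2 Q3 Q4)"
  shows "psi \<bullet> (x - V) > 0"
proof -
  have hull: "convex hull {Q1,Q2,Q3,Q4} \<subseteq> {y. psi \<bullet> y \<ge> psi \<bullet> V}"
    by (rule hull_minimal) (use ge convex_halfspace_ge in \<open>auto simp: inner_diff_right\<close>)
  have "hedral_angle4 V Q1 Q2 Q3 Q4 \<subseteq> {y. psi \<bullet> y \<ge> psi \<bullet> V}"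
  proof
    fix y assume "y \<in> hedral_angle4 V Q1 Q2 Q3 Q4"
    then obtain t q where y: "y = V + t *\<^sub>R (q - V)" "0 \<le> t" "q \<in> convex hull {Q1,Q2,Q3,Q4}"
      unfolding hedral_angle4_def ray_cone_def by blast
    have "psi \<bullet> q \<ge> psi \<bullet> V" using hull y(3) by blast
    hence "t * (psi \<bullet> q - psi \<bullet> V) \<ge> 0" using y(2) by simp
    moreover have "psi \<bullet> y = psi \<bullet> V + t * (psi \<bullet> q - psi \<bullet> V)"
      using y(1) by (simp add: inner_add_right inner_diff_right)
    ultimately show "y \<in> {y. psi \<bullet> y \<ge> psi \<bullet> V}" by simp
  qed
  hence "interior (hedral_angle4 V Q1 Q2 Q3 Q4) \<subseteq> interior {y. psi \<bullet> y \<ge> psi \<bullet> V}"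
    by (rule interior_mono)
  hence "x \<in> {y. psi \<bullet> y > psi \<bullet> V}" using x psi by auto
  thus ?thesis by (simp add: inner_diff_right)
qed

lemma int_pt:
  fixes V e1 e2 e3 e4 :: "real^3"
  assumes m: "e1 \<bullet> (e2 \<times> e3) \<noteq> 0" and c: "c1 > 0" "c2 > 0" "c3 > 0" "c4 \<ge> 0"
  shows "V + c1 *\<^sub>R e1 + c2 *\<^sub>R e2 + c3 *\<^sub>R e3 + c4 *\<^sub>R e4 \<in>
           interior (hedral_angle4 V (V + e1) (V + e2) (V + e3) (V + e4))"
proof -
  let ?m = "e1 \<bullet> (e2 \<times> e3)"
  let ?W = "V + c4 *\<^sub>R e4"
  define f1 where "f1 = (1 / ?m) *\<^sub>R (e2 \<times> e3)"
  define f2 where "f2 = (1 / ?m) *\<^sub>R (e3 \<times> e1)"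
  define f3 where "f3 = (1 / ?m) *\<^sub>R (e1 \<times> e2)"
  have dec: "\<And>z. z = (f1 \<bullet> z) *\<^sub>R e1 + (f2 \<bullet> z) *\<^sub>R e2 + (f3 \<bullet> z) *\<^sub>R e3"
  proof -
    fix z
    have "?m *\<^sub>R z = (z \<bullet> (e2 \<times> e3)) *\<^sub>R e1 + (z \<bullet> (e3 \<times> e1)) *\<^sub>R e2 + (z \<bullet> (e1 \<times> e2)) *\<^sub>R e3"
      by (rule decomp_vec)
    hence "(1 / ?m) *\<^sub>R (?m *\<^sub>R z) = (1 / ?m) *\<^sub>R ((z \<bullet> (e2 \<times> e3)) *\<^sub>R e1 + (z \<bullet> (e3 \<times> e1)) *\<^sub>R e2 + (z \<bullet> (e1 \<times> e2)) *\<^sub>R e3)"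
      by simp
    thus "z = (f1 \<bullet> z) *\<^sub>R e1 + (f2 \<bullet> z) *\<^sub>R e2 + (f3 \<bullet> z) *\<^sub>R e3"
      using m by (simp add: f1_def f2_def f3_def scaleR_add_right inner_commute)
  qed
  define Op where "Op = {z. f1 \<bullet> z > f1 \<bullet> ?W} \<inter> {z. f2 \<bullet> z > f2 \<bullet> ?W} \<inter> {z. f3 \<bullet> z > f3 \<bullet> ?W}"
  have "open Op" unfolding Op_def by (intro open_Int open_halfspace_gt)
  moreover have "Op \<subseteq> hedral_angle4 V (V + e1) (V + e2) (V + e3) (V + e4)"
  proof
    fix z assume "z \<in> Op"
    define s1 where "s1 = f1 \<bullet> (z - ?W)"
    define s2 where "s2 = f2 \<bullet> (z - ?W)"
    define s3 where "s3 = f3 \<bullet> (z - ?W)"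
    have s: "s1 > 0" "s2 > 0" "s3 > 0" using \<open>z \<in> Op\<close> by (auto simp: Op_def s1_def s2_def s3_def inner_diff_right)
    have zd: "z = V + s1 *\<^sub>R e1 + s2 *\<^sub>R e2 + s3 *\<^sub>R e3 + c4 *\<^sub>R e4"
    proof -
      have "z - ?W = s1 *\<^sub>R e1 + s2 *\<^sub>R e2 + s3 *\<^sub>R e3" unfolding s1_def s2_def s3_def by (rule dec)
      thus ?thesis by (simp add: algebra_simps)
    qed
    define t where "t = s1 + s2 + s3 + c4"
    have t: "t > 0" using s c by (simp add: t_def)
    define q where "q = (s1 / t) *\<^sub>R (V + e1) + (s2 / t) *\<^sub>R (V + e2) + (s3 / t) *\<^sub>R (V + e3) + (c4 / t) *\<^sub>R (V + e4)"
    have qh: "q \<in> convex hull {V + e1, V + e2, V + e3, V + e4}"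
      unfolding q_def by (rule hull4_mem) (use s c t in \<open>auto simp: t_def add_divide_distrib[symmetric]\<close>)
    have "(s1 / t) + (s2 / t) + (s3 / t) + (c4 / t) = 1" using t by (simp add: t_def add_divide_distrib[symmetric])
    hence "q = V + (s1 / t) *\<^sub>R e1 + (s2 / t) *\<^sub>R e2 + (s3 / t) *\<^sub>R e3 + (c4 / t) *\<^sub>R e4"
      unfolding q_def by (simp add: algebra_simps scaleR_add_left[symmetric] del: scaleR_add_left)
    hence "z = V + t *\<^sub>R (q - V)" using zd t by (simp add: algebra_simps)
    thus "z \<in> hedral_angle4 V (V + e1) (V + e2) (V + e3) (V + e4)"
      unfolding hedral_angle4_def ray_cone_def using qh t by force
  qed
  moreover have "V + c1 *\<^sub>R e1 + c2 *\<^sub>R e2 + c3 *\<^sub>R e3 + c4 *\<^sub>R e4 \<in> Op"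
  proof -
    have "V + c1 *\<^sub>R e1 + c2 *\<^sub>R e2 + c3 *\<^sub>R e3 + c4 *\<^sub>R e4 - ?W = c1 *\<^sub>R e1 + c2 *\<^sub>R e2 + c3 *\<^sub>R e3"
      by simp
    moreover have "f1 \<bullet> e1 = 1" "f1 \<bullet> e2 = 0" "f1 \<bullet> e3 = 0" "f2 \<bullet> e1 = 0" "f2 \<bullet> e2 = 1" "f2 \<bullet> e3 = 0"
      "f3 \<bullet> e1 = 0" "f3 \<bullet> e2 = 0" "f3 \<bullet> e3 = 1"
      using m triple_cyc[of e1 e2 e3] dot_cross_self[of e2 e3] dot_cross_self[of e3 e1] dot_cross_self[of e1 e2]
      by (auto simp: f1_def f2_def f3_def inner_commute)
    ultimately show ?thesis using c by (auto simp: Op_def inner_diff_right inner_add_right)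
  qed
  ultimately show ?thesis using interior_maximal[of Op] by blast
qed



lemma nE: "n \<bullet> isotropic_dir = n$3"
  by (simp add: isotropic_dir_def inner_axis)

lemma iso_char:
  fixes A B C D :: "real^3"
  assumes n: "(B - A) \<times> (C - A) \<noteq> 0" and D: "D = A + u *\<^sub>R (B - A) + v *\<^sub>R (C - A)"
  shows "(\<not>(\<exists>P. isotropic_plane P \<and> {A,B,C,D} \<subseteq> P)) \<longleftrightarrow> ((B - A) \<times> (C - A))$3 \<noteq> 0"
proof -
  let ?n = "(B - A) \<times> (C - A)"
  let ?H = "{x. ?n \<bullet> x = ?n \<bullet> A}"
  have o1: "?n \<bullet> (B - A) = 0" "?n \<bullet> (C - A) = 0"
    by (metis dot_cross_self(1) inner_commute, simp add: dot_cross_self)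
  have nD: "?n \<bullet> D = ?n \<bullet> A"
    using o1 by (simp add: D inner_add_right)
  have hp: "affine hull {A,B,C,D} = ?H" by (rule hull_plane[OF n nD])
  have SH: "{A,B,C,D} \<subseteq> ?H" using hp hull_subset[of "{A,B,C,D}" affine] by blast
  show ?thesis
  proof
    assume np: "\<not>(\<exists>P. isotropic_plane P \<and> {A,B,C,D} \<subseteq> P)"
    show "?n$3 \<noteq> 0"
    proof
      assume z: "?n$3 = 0"
      have "isotropic_plane ?H"
        unfolding isotropic_plane_def
        using affine_hyperplane n z by (auto simp: inner_add_right nE)
      thus False using np SH by blast
    qed
  next
    assume nz: "?n$3 \<noteq> 0"
    show "\<not>(\<exists>P. isotropic_plane P \<and> {A,B,C,D} \<subseteq> P)"
    proof
      assume "\<exists>P. isotropic_plane P \<and> {A,B,C,D} \<subseteq> P"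
      then obtain P where P: "isotropic_plane P" "{A,B,C,D} \<subseteq> P" by blast
      have aP: "affine P" "aff_dim P = 2" and iso: "\<forall>x\<in>P. \<forall>t::real. x + t *\<^sub>R isotropic_dir \<in> P"
        using P(1) unfolding isotropic_plane_def by auto
      have sub: "affine hull {A,B,C,D} \<subseteq> P" by (rule hull_minimal) (use P aP in auto)
      have "affine hull {A,B,C,D} = P"
        by (rule affine_dim_equal) (use sub aP hp n affine_hyperplane in auto)
      hence PH: "P = ?H" using hp by simp
      have "A + 1 *\<^sub>R isotropic_dir \<in> P" using iso P(2) by blast
      hence "?n \<bullet> (A + isotropic_dir) = ?n \<bullet> A" using PH by simp
      hence "?n$3 = 0" by (simp add: inner_add_right nE)
      thus False using nz by simp
    qed
  qed
qed


lemma pos_ratio: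
  fixes T a b :: real
  assumes "T * a > 0" "T * b > 0"
  shows "a / b > 0"
proof -
  have "(T * a) * (T * b) > 0" using assms by simp
  hence "T * T * (a * b) > 0" by (simp add: algebra_simps)
  hence "a * b > 0" using mult_nonneg_nonpos[of "T * T" "a * b"] by (cases "a * b > 0") auto
  thus ?thesis by (simp add: zero_less_mult_iff zero_less_divide_iff)
qed

lemma backward_core:
  fixes e1 e2 e3 e4 a b c d E :: "real^3"
  assumes m: "e1 \<bullet> (e2 \<times> e3) \<noteq> 0"
    and e4: "e4 = (1 - u - v) *\<^sub>R e1 + u *\<^sub>R e2 + v *\<^sub>R e3"
    and u: "u < 0" and v: "0 < v" and uv: "u + v < 1"
    and z: "a \<bullet> e1 = 0" "a \<bullet> e2 = 0" "b \<bullet> e2 = 0" "b \<bullet> e3 = 0"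
           "c \<bullet> e3 = 0" "c \<bullet> e4 = 0" "d \<bullet> e4 = 0" "d \<bullet> e1 = 0"
    and hE: "a \<bullet> E = -1" "b \<bullet> E = -1" "c \<bullet> E = -1" "d \<bullet> E = -1"
    and s1: "T * ((e1 \<times> e2) \<bullet> E) > 0"
    and s2: "T * ((e2 \<times> e3) \<bullet> E) > 0"
    and s3: "T * (- u * ((e2 \<times> e3) \<bullet> E) + (1 - u - v) * ((e3 \<times> e1) \<bullet> E)) > 0"
    and s4: "T * (v * ((e3 \<times> e1) \<bullet> E) - u * ((e1 \<times> e2) \<bullet> E)) > 0"
  shows "\<exists>q r. d = (1 - q - r) *\<^sub>R a + q *\<^sub>R b + r *\<^sub>R c \<and> q < 0 \<and> 0 < r \<and> q + r < 1
           \<and> a \<bullet> (b \<times> c) \<noteq> 0"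
proof -
  define M where "M = e1 \<bullet> (e2 \<times> e3)"
  define X where "X = e1 \<times> e2"
  define Y where "Y = e2 \<times> e3"
  define Z where "Z = e3 \<times> e1"
  define x where "x = X \<bullet> E"
  define y where "y = Y \<bullet> E"
  define zz where "zz = Z \<bullet> E"
  define W3 where "W3 = - u * y + (1 - u - v) * zz"
  define W4 where "W4 = v * zz - u * x"
  have M0: "M \<noteq> 0" using m M_def by simp
  have dc: "\<And>w. M *\<^sub>R w = (w \<bullet> e1) *\<^sub>R Y + (w \<bullet> e2) *\<^sub>R Z + (w \<bullet> e3) *\<^sub>R X"
    unfolding M_def X_def Y_def Z_def by (rule decomp_cov)
  define al where "al = a \<bullet> e3"
  define be where "be = b \<bullet> e1"
  define ga where "ga = c \<bullet> e1"
  define c2 where "c2 = c \<bullet> e2"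
  define de where "de = d \<bullet> e2"
  define d3 where "d3 = d \<bullet> e3"
  have ma: "M *\<^sub>R a = al *\<^sub>R X" using dc[of a] z by (simp add: al_def)
  have mb: "M *\<^sub>R b = be *\<^sub>R Y" using dc[of b] z by (simp add: be_def)
  have mc: "M *\<^sub>R c = ga *\<^sub>R Y + c2 *\<^sub>R Z" using dc[of c] z by (simp add: ga_def c2_def)
  have md: "M *\<^sub>R d = de *\<^sub>R Z + d3 *\<^sub>R X" using dc[of d] z by (simp add: de_def d3_def)
  have ea: "al * x = - M"
  proof -
    have "(M *\<^sub>R a) \<bullet> E = (al *\<^sub>R X) \<bullet> E" using ma by simp
    thus ?thesis using hE by (simp add: x_def)
  qed
  have eb: "be * y = - M"
  proof -
    have "(M *\<^sub>R b) \<bullet> E = (be *\<^sub>R Y) \<bullet> E" using mb by simp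
    thus ?thesis using hE by (simp add: y_def)
  qed
  have ec: "ga * y + c2 * zz = - M"
  proof -
    have "(M *\<^sub>R c) \<bullet> E = (ga *\<^sub>R Y + c2 *\<^sub>R Z) \<bullet> E" using mc by simp
    thus ?thesis using hE by (simp add: y_def zz_def inner_add_left)
  qed
  have ed: "de * zz + d3 * x = - M"
  proof -
    have "(M *\<^sub>R d) \<bullet> E = (de *\<^sub>R Z + d3 *\<^sub>R X) \<bullet> E" using md by simp
    thus ?thesis using hE by (simp add: x_def zz_def inner_add_left)
  qed
  have c4: "(1 - u - v) * ga + u * c2 = 0"
    using z(6) z(5) by (simp add: e4 inner_add_right ga_def c2_def)
  have d4: "u * de + v * d3 = 0"
    using z(7) z(8) by (simp add: e4 inner_add_right de_def d3_def)
  have gW: "ga * W3 = M * u" unfolding W3_def using ec c4 by algebra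
  have cW: "c2 * W3 = - (1 - u - v) * M" unfolding W3_def using ec c4 by algebra
  have dW: "de * W4 = - v * M" unfolding W4_def using ed d4 by algebra
  have d3W: "d3 * W4 = u * M" unfolding W4_def using ed d4 by algebra
  have Tx: "T * x > 0" using s1 by (simp add: x_def X_def)
  have Ty: "T * y > 0" using s2 by (simp add: y_def Y_def)
  have T3: "T * W3 > 0" using s3 by (simp add: W3_def y_def Y_def zz_def Z_def)
  have T4: "T * W4 > 0" using s4 by (simp add: W4_def x_def X_def zz_def Z_def)
  have x0: "x \<noteq> 0" "y \<noteq> 0" "W3 \<noteq> 0" "W4 \<noteq> 0" using Tx Ty T3 T4 by auto
  have r1: "x / W4 > 0" by (rule pos_ratio[OF Tx T4])
  have r2: "y / W4 > 0" by (rule pos_ratio[OF Ty T4])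
  have r3: "W3 / W4 > 0" by (rule pos_ratio[OF T3 T4])
  have uv1: "1 - u - v > 0" using uv by simp
  define p where "p = - u * (x / W4)"
  define q where "q = (u * v / (1 - u - v)) * (y / W4)"
  define r where "r = (v / (1 - u - v)) * (W3 / W4)"
  have "0 < (- u) * (x / W4)" using u r1 by (intro mult_pos_pos) auto
  hence pp: "p > 0" unfolding p_def by simp
  have qn: "q < 0" unfolding q_def using u v uv1 r2
    by (intro mult_neg_pos divide_neg_pos mult_neg_pos) auto
  have "v / (1 - u - v) > 0" using v uv1 by simp
  hence rp: "r > 0" unfolding r_def using r3 by (rule mult_pos_pos)
  have k1: "p * al = d3"
  proof -
    have "p * al * W4 = - u * (al * x)" using x0 by (simp add: p_def field_simps)
    also have "\<dots> = d3 * W4" using ea d3W by algebra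
    finally show ?thesis using x0 by simp
  qed
  have nzz: "(1 - u - v) * W4 \<noteq> 0" using x0 uv1 by simp
  have rW: "r * ((1 - u - v) * W4) = v * W3"
    unfolding r_def using nzz by (simp add: divide_simps)
  have qW: "q * ((1 - u - v) * W4) = u * v * y"
    unfolding q_def using nzz by (simp add: divide_simps)
  have k2: "r * c2 = de"
  proof -
    have "r * c2 * W4 * (1 - u - v) = v * (c2 * W3)" using rW by algebra
    also have "\<dots> = de * W4 * (1 - u - v)" using cW dW by algebra
    finally show ?thesis using x0 uv1 by simp
  qed
  have k3: "q * be + r * ga = 0"
  proof -
    have "(q * be + r * ga) * W4 * (1 - u - v) = u * v * (be * y) + v * (ga * W3)"
      using rW qW by algebra
    also have "\<dots> = 0" using eb gW by algebra
    finally show ?thesis using x0 uv1 by simp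
  qed
  have "M *\<^sub>R d = M *\<^sub>R (p *\<^sub>R a + q *\<^sub>R b + r *\<^sub>R c)"
  proof -
    have "M *\<^sub>R (p *\<^sub>R a + q *\<^sub>R b + r *\<^sub>R c) = p *\<^sub>R (M *\<^sub>R a) + q *\<^sub>R (M *\<^sub>R b) + r *\<^sub>R (M *\<^sub>R c)"
      by (simp add: algebra_simps)
    also have "\<dots> = (p * al) *\<^sub>R X + (q * be + r * ga) *\<^sub>R Y + (r * c2) *\<^sub>R Z"
      using ma mb mc by (simp add: algebra_simps)
    also have "\<dots> = M *\<^sub>R d" using md k1 k2 k3 by (simp add: algebra_simps)
    finally show ?thesis by (rule sym)
  qed
  hence dd: "d = p *\<^sub>R a + q *\<^sub>R b + r *\<^sub>R c" using M0 by (metis scaleR_cancel_left)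
  have "d \<bullet> E = p * (a \<bullet> E) + q * (b \<bullet> E) + r * (c \<bullet> E)" using dd by (simp add: inner_add_left)
  hence psum: "p = 1 - q - r" using hE by simp
  have det: "a \<bullet> (b \<times> c) \<noteq> 0"
  proof -
    have YZ: "Y \<times> Z = M *\<^sub>R e3" unfolding Y_def Z_def M_def by (rule cross_cross_cyc)
    have Xe3: "X \<bullet> e3 = M" unfolding X_def M_def using triple_cyc(1) by simp
    have "(M *\<^sub>R a) \<bullet> ((M *\<^sub>R b) \<times> (M *\<^sub>R c)) = M^3 * (a \<bullet> (b \<times> c))"
      by (simp add: cross_mult_left cross_mult_right power3_eq_cube)
    moreover have "(M *\<^sub>R a) \<bullet> ((M *\<^sub>R b) \<times> (M *\<^sub>R c)) = al * be * c2 * M * M"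
      unfolding ma mb mc
      by (simp add: cross_mult_left cross_mult_right cross_add_right YZ Xe3)
    moreover have "al \<noteq> 0" "be \<noteq> 0" "c2 \<noteq> 0" using ea eb cW M0 uv1 by auto
    ultimately show ?thesis using M0 by (auto simp: power3_eq_cube)
  qed
  show ?thesis using dd psum qn rp pp det by (intro exI[of _ q] exI[of _ r]) auto
qed


lemma hat_comp: "hat A $ 1 = A $ 1" "hat A $ 2 = A $ 2" "hat A $ 3 = -1"
  by (simp_all add: hat_def)

lemma delta_hat:
  fixes A B C :: "real^3"
  shows "((B - A) \<times> (C - A))$3 = - (hat A \<bullet> (hat B \<times> hat C))"
  by (simp add: hat_def inner_vec_def sum_3 cross_components algebra_simps)

lemma tri_facts:
  fixes e1 e2 e3 :: "real^3"
  shows "(e1 \<times> e2) \<bullet> e1 = 0" "(e1 \<times> e2) \<bullet> e2 = 0" "(e1 \<times> e2) \<bullet> e3 = e1 \<bullet> (e2 \<times> e3)"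
    "(e2 \<times> e3) \<bullet> e1 = e1 \<bullet> (e2 \<times> e3)" "(e2 \<times> e3) \<bullet> e2 = 0" "(e2 \<times> e3) \<bullet> e3 = 0"
    "(e3 \<times> e1) \<bullet> e1 = 0" "(e3 \<times> e1) \<bullet> e2 = e1 \<bullet> (e2 \<times> e3)" "(e3 \<times> e1) \<bullet> e3 = 0"
  by (simp_all add: inner_vec_def sum_3 cross_components algebra_simps)

lemma backward:
  fixes A B C D V Q1 Q2 Q3 Q4 :: "real^3"
  assumes cq: "convex_quadrilateral Q1 Q2 Q3 Q4"
    and nV: "V \<notin> affine hull {Q1, Q2, Q3, Q4}"
    and adm: "admissible V (hedral_angle4 V Q1 Q2 Q3 Q4)"
    and fA: "flat_angle V Q1 Q2 \<subseteq> dual_plane A"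
    and fB: "flat_angle V Q2 Q3 \<subseteq> dual_plane B"
    and fC: "flat_angle V Q3 Q4 \<subseteq> dual_plane C"
    and fD: "flat_angle V Q4 Q1 \<subseteq> dual_plane D"
  shows "\<exists>u v. ((B - A) \<times> (C - A))$3 \<noteq> 0 \<and> D = A + u *\<^sub>R (B - A) + v *\<^sub>R (C - A)
           \<and> u < 0 \<and> 0 < v \<and> u + v < 1"
proof -
  obtain u v where nQ: "(Q2 - Q1) \<times> (Q3 - Q1) \<noteq> 0"
    and Q4: "Q4 = Q1 + u *\<^sub>R (Q2 - Q1) + v *\<^sub>R (Q3 - Q1)" and u: "u < 0" and v: "0 < v"
    and uv: "u + v < 1"
    using cq_elim[OF cq] by blast
  let ?n = "(Q2 - Q1) \<times> (Q3 - Q1)"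
  have o1: "?n \<bullet> (Q2 - Q1) = 0" "?n \<bullet> (Q3 - Q1) = 0"
    by (metis dot_cross_self(1) inner_commute, simp add: dot_cross_self)
  have nQ4: "?n \<bullet> Q4 = ?n \<bullet> Q1"
    using o1 by (simp add: Q4 inner_add_right)
  have hp: "affine hull {Q1,Q2,Q3,Q4} = {x. ?n \<bullet> x = ?n \<bullet> Q1}" by (rule hull_plane[OF nQ nQ4])
  define e1 where "e1 = Q1 - V"
  define e2 where "e2 = Q2 - V"
  define e3 where "e3 = Q3 - V"
  define e4 where "e4 = Q4 - V"
  define M where "M = e1 \<bullet> (e2 \<times> e3)"
  have "?n \<bullet> V \<noteq> ?n \<bullet> Q1" using nV hp by auto
  hence "?n \<bullet> (Q1 - V) \<noteq> 0" by (simp add: inner_diff_right)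
  hence M0: "M \<noteq> 0" unfolding M_def e1_def e2_def e3_def using apex_id[of Q2 Q1 Q3 V] by simp
  have e4f: "e4 = (1 - u - v) *\<^sub>R e1 + u *\<^sub>R e2 + v *\<^sub>R e3"
    unfolding e1_def e2_def e3_def e4_def Q4 by (simp add: algebra_simps)
  have memb: "\<And>P Q X. flat_angle V P Q \<subseteq> dual_plane X \<Longrightarrow>
      hat X \<bullet> (P - V) = 0 \<and> hat X \<bullet> (Q - V) = 0 \<and> hat X \<bullet> V = X$3"
  proof -
    fix P Q X assume "flat_angle V P Q \<subseteq> dual_plane X"
    hence "V \<in> dual_plane X" "P \<in> dual_plane X" "Q \<in> dual_plane X" using flat_mem by blast+
    thus "hat X \<bullet> (P - V) = 0 \<and> hat X \<bullet> (Q - V) = 0 \<and> hat X \<bullet> V = X$3"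
      by (simp add: dual_hat inner_diff_right)
  qed
  have hA: "hat A \<bullet> e1 = 0" "hat A \<bullet> e2 = 0" "hat A \<bullet> V = A$3"
    using memb[OF fA] by (simp_all add: e1_def e2_def)
  have hB: "hat B \<bullet> e2 = 0" "hat B \<bullet> e3 = 0" "hat B \<bullet> V = B$3"
    using memb[OF fB] by (simp_all add: e2_def e3_def)
  have hC: "hat C \<bullet> e3 = 0" "hat C \<bullet> e4 = 0" "hat C \<bullet> V = C$3"
    using memb[OF fC] by (simp_all add: e3_def e4_def)
  have hD: "hat D \<bullet> e4 = 0" "hat D \<bullet> e1 = 0" "hat D \<bullet> V = D$3"
    using memb[OF fD] by (simp_all add: e4_def e1_def)
  obtain P where P: "P \<in> isotropic_line V" "P \<in> interior (hedral_angle4 V Q1 Q2 Q3 Q4)"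
    using adm unfolding admissible_def by blast
  obtain t where Pt: "P = V + t *\<^sub>R isotropic_dir" using P(1) unfolding isotropic_line_def by blast
  let ?E = "isotropic_dir"
  let ?X = "e1 \<times> e2" let ?Y = "e2 \<times> e3" let ?Z = "e3 \<times> e1"
  have tf: "?X \<bullet> e1 = 0" "?X \<bullet> e2 = 0" "?X \<bullet> e3 = M" "?Y \<bullet> e1 = M" "?Y \<bullet> e2 = 0" "?Y \<bullet> e3 = 0"
    "?Z \<bullet> e1 = 0" "?Z \<bullet> e2 = M" "?Z \<bullet> e3 = 0"
    by (simp_all add: M_def inner_vec_def sum_3 cross_components algebra_simps)
  have Qs: "Q1 - V = e1" "Q2 - V = e2" "Q3 - V = e3" "Q4 - V = e4"
    by (simp_all add: e1_def e2_def e3_def e4_def)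
  have MM: "M * M > 0" using M0 by (auto simp: zero_less_mult_iff linorder_neq_iff)
  have gen: "\<And>psi. psi \<bullet> e1 \<ge> 0 \<Longrightarrow> psi \<bullet> e2 \<ge> 0 \<Longrightarrow> psi \<bullet> e3 \<ge> 0 \<Longrightarrow> psi \<bullet> e4 \<ge> 0 \<Longrightarrow>
      psi \<noteq> 0 \<Longrightarrow> t * (psi \<bullet> ?E) > 0"
  proof -
    fix psi :: "real^3"
    assume "psi \<bullet> e1 \<ge> 0" "psi \<bullet> e2 \<ge> 0" "psi \<bullet> e3 \<ge> 0" "psi \<bullet> e4 \<ge> 0" "psi \<noteq> 0"
    hence "psi \<bullet> (P - V) > 0"
      using int_half[where psi=psi and x=P, OF _ _ P(2)] Qs by auto
    thus "t * (psi \<bullet> ?E) > 0" using Pt by simp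
  qed
  have s1: "(t * M) * (?X \<bullet> ?E) > 0"
  proof -
    have "t * ((M *\<^sub>R ?X) \<bullet> ?E) > 0"
    proof (rule gen)
      show "M *\<^sub>R ?X \<noteq> 0" using tf M0 by (metis inner_zero_left mult_eq_0_iff inner_scaleR_left)
    qed (use tf MM v in \<open>auto simp: e4f inner_add_right\<close>)
    thus ?thesis by (simp add: algebra_simps)
  qed
  have s2: "(t * M) * (?Y \<bullet> ?E) > 0"
  proof -
    have "t * ((M *\<^sub>R ?Y) \<bullet> ?E) > 0"
    proof (rule gen)
      show "M *\<^sub>R ?Y \<noteq> 0" using tf M0 by (metis inner_zero_left mult_eq_0_iff inner_scaleR_left)
    qed (use tf MM uv in \<open>auto simp: e4f inner_add_right\<close>)
    thus ?thesis by (simp add: algebra_simps)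
  qed
  have s3: "(t * M) * (- u * (?Y \<bullet> ?E) + (1 - u - v) * (?Z \<bullet> ?E)) > 0"
  proof -
    define psi where "psi = M *\<^sub>R ((- u) *\<^sub>R ?Y + (1 - u - v) *\<^sub>R ?Z)"
    have v1: "psi \<bullet> e1 = (- u) * (M * M)" unfolding psi_def using tf by (simp add: inner_add_left inner_diff_left)
    have v2: "psi \<bullet> e2 = (1 - u - v) * (M * M)" unfolding psi_def using tf by (simp add: inner_add_left inner_diff_left)
    have v3: "psi \<bullet> e3 = 0" unfolding psi_def using tf by (simp add: inner_add_left inner_diff_left)
    have v4: "psi \<bullet> e4 = 0" unfolding psi_def using tf
      by (simp add: inner_add_left inner_diff_left inner_add_right e4f algebra_simps)
    have g1: "psi \<bullet> e1 > 0" unfolding v1 by (rule mult_pos_pos) (use u MM in auto)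
    have g2: "psi \<bullet> e2 > 0" unfolding v2 by (rule mult_pos_pos) (use uv MM in auto)
    have "t * (psi \<bullet> ?E) > 0"
      by (rule gen) (use g1 g2 v3 v4 in auto)
    thus ?thesis unfolding psi_def by (simp add: algebra_simps inner_add_left)
  qed
  have s4: "(t * M) * (v * (?Z \<bullet> ?E) - u * (?X \<bullet> ?E)) > 0"
  proof -
    define psi where "psi = M *\<^sub>R (v *\<^sub>R ?Z - u *\<^sub>R ?X)"
    have v1: "psi \<bullet> e1 = 0" unfolding psi_def using tf by (simp add: inner_diff_left)
    have v2: "psi \<bullet> e2 = v * (M * M)" unfolding psi_def using tf by (simp add: inner_diff_left)
    have v3: "psi \<bullet> e3 = (- u) * (M * M)" unfolding psi_def using tf by (simp add: inner_diff_left)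
    have v4: "psi \<bullet> e4 = 0" unfolding psi_def using tf
      by (simp add: inner_diff_left inner_add_right e4f algebra_simps)
    have g2: "psi \<bullet> e2 > 0" unfolding v2 by (rule mult_pos_pos) (use v MM in auto)
    have g3: "psi \<bullet> e3 > 0" unfolding v3 by (rule mult_pos_pos) (use u MM in auto)
    have "t * (psi \<bullet> ?E) > 0"
      by (rule gen) (use g2 g3 v1 v4 in auto)
    thus ?thesis unfolding psi_def by (simp add: algebra_simps inner_diff_left)
  qed
  obtain q r where qr: "hat D = (1 - q - r) *\<^sub>R hat A + q *\<^sub>R hat B + r *\<^sub>R hat C"
    "q < 0" "0 < r" "q + r < 1" "hat A \<bullet> (hat B \<times> hat C) \<noteq> 0"
    using backward_core[of e1 e2 e3 e4 u v "hat A" "hat B" "hat C" "hat D" ?E "t * M",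
        OF _ e4f u v uv hA(1,2) hB(1,2) hC(1,2) hD(1,2) hat_E hat_E hat_E hat_E s1 s2 s3 s4]
      M0 M_def by blast
  have Dq: "D = A + q *\<^sub>R (B - A) + r *\<^sub>R (C - A)"
  proof -
    have c1: "D$1 = (1 - q - r) * A$1 + q * B$1 + r * C$1"
      using arg_cong[OF qr(1), of "\<lambda>w. w$1"] by (simp add: hat_comp)
    have c2: "D$2 = (1 - q - r) * A$2 + q * B$2 + r * C$2"
      using arg_cong[OF qr(1), of "\<lambda>w. w$2"] by (simp add: hat_comp)
    have c3: "D$3 = (1 - q - r) * A$3 + q * B$3 + r * C$3"
      using arg_cong[OF qr(1), of "\<lambda>w. w \<bullet> V"] hA(3) hB(3) hC(3) hD(3)
      by (simp add: inner_add_left)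
    show ?thesis using c1 c2 c3
      by (simp add: vec_eq_iff forall_3 algebra_simps)
  qed
  have "((B - A) \<times> (C - A))$3 \<noteq> 0" using qr(5) by (simp add: delta_hat)
  thus ?thesis using Dq qr by blast
qed


lemma forward:
  fixes A B C D :: "real^3"
  assumes del: "((B - A) \<times> (C - A))$3 \<noteq> 0" and Dq: "D = A + q *\<^sub>R (B - A) + r *\<^sub>R (C - A)"
    and q: "q < 0" and r: "0 < r" and qr: "q + r < 1"
  shows "\<exists>V Q1 Q2 Q3 Q4.
            convex_quadrilateral Q1 Q2 Q3 Q4 \<and>
            V \<notin> affine hull {Q1, Q2, Q3, Q4} \<and>
            admissible V (hedral_angle4 V Q1 Q2 Q3 Q4) \<and>
            flat_angle V Q1 Q2 \<subseteq> dual_plane A \<and>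
            flat_angle V Q2 Q3 \<subseteq> dual_plane B \<and>
            flat_angle V Q3 Q4 \<subseteq> dual_plane C \<and>
            flat_angle V Q4 Q1 \<subseteq> dual_plane D"
proof -
  define p where "p = 1 - q - r"
  have p: "p > 0" using qr by (simp add: p_def)
  define a where "a = hat A"
  define b where "b = hat B"
  define c where "c = hat C"
  define d where "d = hat D"
  define m where "m = a \<bullet> (b \<times> c)"
  have m0: "m \<noteq> 0" using del by (simp add: m_def a_def b_def c_def delta_hat)
  have dform: "d = p *\<^sub>R a + q *\<^sub>R b + r *\<^sub>R c"
    by (simp add: d_def a_def b_def c_def p_def Dq hat_def vec_eq_iff forall_3 algebra_simps)
  have D3: "D$3 = p * A$3 + q * B$3 + r * C$3"
    by (simp add: Dq p_def algebra_simps)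
  define X where "X = a \<times> b"
  define Y where "Y = b \<times> c"
  define Z where "Z = c \<times> a"
  have tf: "X \<bullet> a = 0" "X \<bullet> b = 0" "X \<bullet> c = m" "Y \<bullet> a = m" "Y \<bullet> b = 0" "Y \<bullet> c = 0"
    "Z \<bullet> a = 0" "Z \<bullet> b = m" "Z \<bullet> c = 0"
    by (simp_all add: X_def Y_def Z_def m_def inner_vec_def sum_3 cross_components algebra_simps)
  have tf': "a \<bullet> X = 0" "b \<bullet> X = 0" "c \<bullet> X = m" "a \<bullet> Y = m" "b \<bullet> Y = 0" "c \<bullet> Y = 0"
    "a \<bullet> Z = 0" "b \<bullet> Z = m" "c \<bullet> Z = 0"
    using tf by (simp_all add: inner_commute)
  define V where "V = (1 / m) *\<^sub>R ((A$3) *\<^sub>R Y + (B$3) *\<^sub>R Z + (C$3) *\<^sub>R X)"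
  have aV: "a \<bullet> V = A$3" "b \<bullet> V = B$3" "c \<bullet> V = C$3"
    using tf' m0 by (simp_all add: V_def inner_add_right)
  have dV: "d \<bullet> V = D$3" using aV by (simp add: dform D3 inner_add_left)
  define k where "k = - 1 / m"
  have k0: "k \<noteq> 0" using m0 by (simp add: k_def)
  have km: "k * m = -1" using m0 by (simp add: k_def)
  define e1 where "e1 = k *\<^sub>R (X - (r / q) *\<^sub>R Z)"
  define e2 where "e2 = k *\<^sub>R X"
  define e3 where "e3 = k *\<^sub>R Y"
  define e4 where "e4 = k *\<^sub>R (Y - (p / q) *\<^sub>R Z)"
  have q0: "q \<noteq> 0" and r0: "r \<noteq> 0" using q r by auto
  have dots: "a \<bullet> e1 = 0" "a \<bullet> e2 = 0" "b \<bullet> e2 = 0" "b \<bullet> e3 = 0" "c \<bullet> e3 = 0" "c \<bullet> e4 = 0"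
    "d \<bullet> e4 = 0" "d \<bullet> e1 = 0"
    using tf' q0 by (simp_all add: e1_def e2_def e3_def e4_def dform inner_diff_right inner_add_left algebra_simps)
  define M where "M = e1 \<bullet> (e2 \<times> e3)"
  have XY: "X \<times> Y = m *\<^sub>R b"
  proof -
    have "(a \<times> b) \<times> (b \<times> c) = (c \<bullet> (a \<times> b)) *\<^sub>R b" by (rule cross_cross_cyc)
    moreover have "c \<bullet> (a \<times> b) = m" using tf(3) by (simp add: X_def inner_commute)
    ultimately show ?thesis by (simp add: X_def Y_def)
  qed
  have M: "M = - (k^3 * m * m * r / q)"
  proof -
    have "M = k^3 * ((X - (r / q) *\<^sub>R Z) \<bullet> (X \<times> Y))"
      by (simp add: M_def e1_def e2_def e3_def cross_mult_left cross_mult_right power3_eq_cube)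
    also have "\<dots> = k^3 * (m * (X \<bullet> b) - (r / q) * (m * (Z \<bullet> b)))"
      by (simp add: XY inner_diff_left algebra_simps)
    also have "\<dots> = - (k^3 * m * m * r / q)" using tf by simp
    finally show ?thesis .
  qed
  have M0: "M \<noteq> 0" using M k0 m0 q0 r0 by simp
  define Q1 where "Q1 = V + e1"
  define Q2 where "Q2 = V + e2"
  define Q3 where "Q3 = V + e3"
  define Q4 where "Q4 = V + e4"
  have apx: "((Q2 - Q1) \<times> (Q3 - Q1)) \<bullet> (Q1 - V) = M"
    using apex_id[of Q2 Q1 Q3 V] by (simp add: M_def Q1_def Q2_def Q3_def)
  have nQ: "(Q2 - Q1) \<times> (Q3 - Q1) \<noteq> 0" using apx M0 by auto
  define u where "u = - p / r"
  have e4f: "e4 = e1 + u *\<^sub>R (e2 - e1) + 1 *\<^sub>R (e3 - e1)"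
  proof -
    have pr: "(p / r) * (r / q) = p / q" using r0 by simp
    have "e1 + u *\<^sub>R (e2 - e1) + 1 *\<^sub>R (e3 - e1) = (p / r) *\<^sub>R e1 - (p / r) *\<^sub>R e2 + e3"
      by (simp add: u_def algebra_simps)
    also have "\<dots> = k *\<^sub>R (Y - ((p / r) * (r / q)) *\<^sub>R Z)"
      by (simp add: e1_def e2_def e3_def algebra_simps)
    also have "\<dots> = e4" using pr by (simp add: e4_def)
    finally show ?thesis by simp
  qed
  have Q4f: "Q4 = Q1 + u *\<^sub>R (Q2 - Q1) + 1 *\<^sub>R (Q3 - Q1)"
    using e4f by (simp add: Q1_def Q2_def Q3_def Q4_def algebra_simps)
  have u: "u < 0" using p r by (simp add: u_def)
  have uv: "u + 1 < 1" using u by simp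
  have cq: "convex_quadrilateral Q1 Q2 Q3 Q4"
    by (rule cq_intro[OF nQ Q4f u _ uv]) simp
  have nV: "V \<notin> affine hull {Q1, Q2, Q3, Q4}"
  proof -
    let ?n = "(Q2 - Q1) \<times> (Q3 - Q1)"
    have o1: "?n \<bullet> (Q2 - Q1) = 0" "?n \<bullet> (Q3 - Q1) = 0"
      by (metis dot_cross_self(1) inner_commute, simp add: dot_cross_self)
    have nQ4: "?n \<bullet> Q4 = ?n \<bullet> Q1"
      using o1 by (simp add: Q4f inner_add_right inner_diff_right)
    have hp: "affine hull {Q1,Q2,Q3,Q4} = {x. ?n \<bullet> x = ?n \<bullet> Q1}" by (rule hull_plane[OF nQ nQ4])
    have "?n \<bullet> (Q1 - V) \<noteq> 0" using apx M0 by simp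
    hence "?n \<bullet> V \<noteq> ?n \<bullet> Q1" by (simp add: inner_diff_right)
    thus ?thesis using hp by auto
  qed
  have adm: "admissible V (hedral_angle4 V Q1 Q2 Q3 Q4)"
  proof -
    let ?E = "isotropic_dir"
    have Ea: "a \<bullet> ?E = -1" "b \<bullet> ?E = -1" "c \<bullet> ?E = -1" by (simp_all add: a_def b_def c_def hat_E)
    have "m *\<^sub>R ?E = (?E \<bullet> a) *\<^sub>R (b \<times> c) + (?E \<bullet> b) *\<^sub>R (c \<times> a) + (?E \<bullet> c) *\<^sub>R (a \<times> b)"
      unfolding m_def by (rule decomp_cov)
    hence mE: "m *\<^sub>R ?E = - (X + Y + Z)" using Ea by (simp add: X_def Y_def Z_def inner_commute)
    have "?E = (1 / m) *\<^sub>R (m *\<^sub>R ?E)" using m0 by simp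
    also have "\<dots> = (1 / m) *\<^sub>R (- (X + Y + Z))" using mE by simp
    also have "\<dots> = k *\<^sub>R (X + Y + Z)" by (simp add: k_def algebra_simps)
    finally have Ef: "?E = k *\<^sub>R (X + Y + Z)" .
    define s where "s = - q / (1 - q)"
    have s: "s > 0" "1 - s > 0" using q by (simp_all add: s_def field_simps)
    have sq: "s * ((r + p) / q) = -1" using q by (simp add: s_def p_def field_simps)
    have "s *\<^sub>R e1 + (1 - s) *\<^sub>R e2 + (1 - s) *\<^sub>R e3 + s *\<^sub>R e4
          = k *\<^sub>R (X + Y - (s * ((r + p) / q)) *\<^sub>R Z)"
      by (simp add: e1_def e2_def e3_def e4_def algebra_simps add_divide_distrib)
    also have "\<dots> = ?E" using sq Ef by simp
    finally have Ee: "?E = s *\<^sub>R e1 + (1 - s) *\<^sub>R e2 + (1 - s) *\<^sub>R e3 + s *\<^sub>R e4" by simp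
    have "V + s *\<^sub>R e1 + (1 - s) *\<^sub>R e2 + (1 - s) *\<^sub>R e3 + s *\<^sub>R e4 \<in>
           interior (hedral_angle4 V (V + e1) (V + e2) (V + e3) (V + e4))"
      by (rule int_pt) (use M0 s in \<open>auto simp: M_def\<close>)
    hence "V + 1 *\<^sub>R ?E \<in> interior (hedral_angle4 V Q1 Q2 Q3 Q4)"
      by (simp add: Ee Q1_def Q2_def Q3_def Q4_def add.assoc)
    moreover have "V + 1 *\<^sub>R ?E \<in> isotropic_line V" unfolding isotropic_line_def by blast
    ultimately show ?thesis unfolding admissible_def by blast
  qed
  have fa: "flat_angle V Q1 Q2 \<subseteq> dual_plane A"
    by (rule flat_sub) (use aV dots in \<open>auto simp: a_def Q1_def Q2_def inner_add_right\<close>)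
  have fb: "flat_angle V Q2 Q3 \<subseteq> dual_plane B"
    by (rule flat_sub) (use aV dots in \<open>auto simp: b_def Q2_def Q3_def inner_add_right\<close>)
  have fc: "flat_angle V Q3 Q4 \<subseteq> dual_plane C"
    by (rule flat_sub) (use aV dots in \<open>auto simp: c_def Q3_def Q4_def inner_add_right\<close>)
  have fd: "flat_angle V Q4 Q1 \<subseteq> dual_plane D"
    by (rule flat_sub) (use dV dots in \<open>auto simp: d_def Q4_def Q1_def inner_add_right\<close>)
  show ?thesis using cq nV adm fa fb fc fd by blast
qed


theorem lemma1:
  fixes A B C D :: "real^3"
  shows "(convex_quadrilateral A B C D \<and>
          \<not> (\<exists>P. isotropic_plane P \<and> {A, B, C, D} \<subseteq> P))
     \<longleftrightarrow>
         (\<exists>V Q1 Q2 Q3 Q4.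
            convex_quadrilateral Q1 Q2 Q3 Q4 \<and>
            V \<notin> affine hull {Q1, Q2, Q3, Q4} \<and>
            admissible V (hedral_angle4 V Q1 Q2 Q3 Q4) \<and>
            flat_angle V Q1 Q2 \<subseteq> dual_plane A \<and>
            flat_angle V Q2 Q3 \<subseteq> dual_plane B \<and>
            flat_angle V Q3 Q4 \<subseteq> dual_plane C \<and>
            flat_angle V Q4 Q1 \<subseteq> dual_plane D)"
proof
  assume L: "convex_quadrilateral A B C D \<and> \<not> (\<exists>P. isotropic_plane P \<and> {A, B, C, D} \<subseteq> P)"
  obtain u v where n: "(B - A) \<times> (C - A) \<noteq> 0" and Df: "D = A + u *\<^sub>R (B - A) + v *\<^sub>R (C - A)"
    and uv: "u < 0" "0 < v" "u + v < 1"
    using cq_elim L by blast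
  have "((B - A) \<times> (C - A))$3 \<noteq> 0" using iso_char[OF n Df] L by blast
  thus "\<exists>V Q1 Q2 Q3 Q4.
            convex_quadrilateral Q1 Q2 Q3 Q4 \<and>
            V \<notin> affine hull {Q1, Q2, Q3, Q4} \<and>
            admissible V (hedral_angle4 V Q1 Q2 Q3 Q4) \<and>
            flat_angle V Q1 Q2 \<subseteq> dual_plane A \<and>
            flat_angle V Q2 Q3 \<subseteq> dual_plane B \<and>
            flat_angle V Q3 Q4 \<subseteq> dual_plane C \<and>
            flat_angle V Q4 Q1 \<subseteq> dual_plane D"
    using forward[OF _ Df uv] by blast
next
  assume "\<exists>V Q1 Q2 Q3 Q4.
            convex_quadrilateral Q1 Q2 Q3 Q4 \<and>
            V \<notin> affine hull {Q1, Q2, Q3, Q4} \<and>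
            admissible V (hedral_angle4 V Q1 Q2 Q3 Q4) \<and>
            flat_angle V Q1 Q2 \<subseteq> dual_plane A \<and>
            flat_angle V Q2 Q3 \<subseteq> dual_plane B \<and>
            flat_angle V Q3 Q4 \<subseteq> dual_plane C \<and>
            flat_angle V Q4 Q1 \<subseteq> dual_plane D"
  then obtain u v where d: "((B - A) \<times> (C - A))$3 \<noteq> 0"
    and Df: "D = A + u *\<^sub>R (B - A) + v *\<^sub>R (C - A)" and uv: "u < 0" "0 < v" "u + v < 1"
    using backward by metis
  have n: "(B - A) \<times> (C - A) \<noteq> 0" using d by auto
  show "convex_quadrilateral A B C D \<and> \<not> (\<exists>P. isotropic_plane P \<and> {A, B, C, D} \<subseteq> P)"
    using cq_intro[OF n Df uv] iso_char[OF n Df] d by blast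
qed

end
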